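(* Let $f\colon[0,1]\to\mathbb{R}$ be continuous. For natural $n$ let $x_n:=\sum_{k=1}^{n-1} f\big(\tfrac kn\big)$ and $y_n:=x_{n+1}-x_n$. If $\lim_{n\to\infty} y_n$ exists, then $\lim_{n\to\infty} y_n=\int_0^1 f(x)\,dx$. *)

theory Defs
  imports "HOL-Analysis.Analysis"
begin

end

theory Submission
  imports Defs
begin

lemma telesc:
  fixes g :: "nat \<Rightarrow> real" and n :: nat
  shows "(\<Sum>k=1..n. (g k - g (k - 1))) = g n - g 0"
  by (induction n) auto

lemma cesaro0:
  fixes z :: "nat \<Rightarrow> real"
  assumes "z \<longlonglongrightarrow> 0"
  shows "(\<lambda>n. (\<Sum>m<n. z m) / real n) \<longlonglongrightarrow> 0"
proof (rule LIMSEQ_I)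
  fix e :: real assume e: "0 < e"
  then have "e/2 > 0" by simp
  from LIMSEQ_D[OF assms this] obtain N where N: "\<And>m. m \<ge> N \<Longrightarrow> norm (z m - 0) < e/2" by blast
  define C where "C = (\<Sum>m<N. \<bar>z m\<bar>)"
  have C0: "C \<ge> 0" unfolding C_def by (simp add: sum_nonneg)
  obtain M :: nat where M: "real M > 2*C/e" using reals_Archimedean2 by blast
  show "\<exists>no. \<forall>n\<ge>no. norm ((\<Sum>m<n. z m) / real n - 0) < e"
  proof (intro exI allI impI)
    fix n assume n: "n \<ge> max (Suc N) M"
    then have nN: "N \<le> n" and npos: "real n > 0" and nM: "real n \<ge> real M" by auto
    have split: "(\<Sum>m<n. z m) = (\<Sum>m<N. z m) + (\<Sum>m=N..<n. z m)"
      using sum.atLeastLessThan_concat[of 0 N n z] nN by (simp add: lessThan_atLeast0)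
    have b1: "\<bar>\<Sum>m<N. z m\<bar> \<le> C" unfolding C_def by (rule sum_abs)
    have "\<bar>\<Sum>m=N..<n. z m\<bar> \<le> (\<Sum>m=N..<n. \<bar>z m\<bar>)" by (rule sum_abs)
    also have "\<dots> \<le> (\<Sum>m=N..<n. e/2)"
    proof (rule sum_mono)
      fix m assume "m \<in> {N..<n}"
      then have "norm (z m - 0) < e/2" using N by simp
      then show "\<bar>z m\<bar> \<le> e/2" by simp
    qed
    also have "\<dots> = real (n - N) * (e/2)" by simp
    also have "\<dots> \<le> real n * (e/2)"
      by (rule mult_right_mono) (use e in auto)
    finally have b2: "\<bar>\<Sum>m=N..<n. z m\<bar> \<le> real n * (e/2)" .
    have tot: "\<bar>\<Sum>m<n. z m\<bar> \<le> C + real n * (e/2)" using b1 b2 split by linarith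
    have "C < real n * (e/2)"
    proof -
      have "2*C/e < real n" using M nM by linarith
      then have "2*C < real n * e" using e by (simp add: divide_less_eq)
      then show ?thesis by simp
    qed
    then have "\<bar>\<Sum>m<n. z m\<bar> < real n * e" using tot by linarith
    then show "norm ((\<Sum>m<n. z m) / real n - 0) < e"
    proof -
      have "\<bar>(\<Sum>m<n. z m) / real n\<bar> = \<bar>\<Sum>m<n. z m\<bar> / real n" by (rule sym, rule abs_div_pos[OF npos])
      also have "\<dots> < e" using \<open>\<bar>\<Sum>m<n. z m\<bar> < real n * e\<close> npos by (simp add: pos_divide_less_eq mult.commute)
      finally show ?thesis by simp
    qed
  qed
qed

lemma cesaro:
  fixes y :: "nat \<Rightarrow> real"
  assumes "y \<longlonglongrightarrow> L"
  shows "(\<lambda>n. (\<Sum>m<n. y m) / real n) \<longlonglongrightarrow> L"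
proof -
  have "(\<lambda>m. y m - L) \<longlonglongrightarrow> 0" using tendsto_diff[OF assms tendsto_const[of L]] by simp
  from cesaro0[OF this] have "(\<lambda>n. (\<Sum>m<n. y m - L) / real n + L) \<longlonglongrightarrow> 0 + L"
    by (intro tendsto_add) auto
  moreover have "\<forall>\<^sub>F n in sequentially. (\<Sum>m<n. y m - L) / real n + L = (\<Sum>m<n. y m) / real n"
    using eventually_gt_at_top[of 0]
    by eventually_elim (simp add: sum_subtractf field_simps)
  ultimately show ?thesis by (simp add: tendsto_cong)
qed


lemma riemann:
  fixes f :: "real \<Rightarrow> real"
  assumes cont: "continuous_on {0..1} f"
  shows "(\<lambda>n. (\<Sum>k=1..n. f (real k / real n)) / real n) \<longlonglongrightarrow> integral {0..1} f"
proof (rule LIMSEQ_I)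
  fix e :: real assume e: "0 < e"
  define F where "F x = integral {0..x} f" for x
  have uc: "uniformly_continuous_on {0..1} f"
    using compact_uniformly_continuous[OF cont compact_Icc] .
  have "e/2 > 0" using e by simp
  with uc obtain d where d: "d > 0"
    and dd: "\<And>x x'. x \<in> {0..1} \<Longrightarrow> x' \<in> {0..1} \<Longrightarrow> dist x' x < d \<Longrightarrow> dist (f x') (f x) < e/2"
    unfolding uniformly_continuous_on_def by metis
  obtain N :: nat where N: "inverse (real (Suc N)) < d"
    using reals_Archimedean[OF d] by blast
  have Fder: "\<And>x. x \<in> {0..1} \<Longrightarrow> (F has_real_derivative f x) (at x within {0..1})"
    unfolding F_def by (rule integral_has_real_derivative[OF cont])
  show "\<exists>no. \<forall>n\<ge>no. norm ((\<Sum>k=1..n. f (real k / real n)) / real n - integral {0..1} f) < e"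
  proof (intro exI allI impI)
    fix n assume n: "n \<ge> Suc N"
    then have npos: "real n > 0" by simp
    have nd: "1 / real n < d"
    proof -
      have "1 / real n \<le> inverse (real (Suc N))"
        using n by (simp add: divide_simps)
      then show ?thesis using N by linarith
    qed
    have step: "\<exists>\<xi>. \<xi> \<in> {(real k - 1) / real n .. real k / real n} \<and>
        F (real k / real n) - F ((real k - 1) / real n) = f \<xi> * (1 / real n)"
      if k: "k \<in> {1..n}" for k
    proof -
      let ?a = "(real k - 1) / real n" and ?b = "real k / real n"
      have ab: "?a \<le> ?b" using npos by (simp add: divide_right_mono)
      have sub: "{?a..?b} \<subseteq> {0..1}"
        using k npos by (auto simp: divide_simps)
      have "\<exists>x\<in>{?a..?b}. F ?b - F ?a = (\<lambda>h. f x * h) (?b - ?a)"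
      proof (rule mvt_very_simple[OF ab])
        fix x assume "?a \<le> x" "x \<le> ?b"
        then have x: "x \<in> {0..1}" using sub by auto
        have "(F has_real_derivative f x) (at x within {?a..?b})"
          by (rule has_field_derivative_subset[OF Fder[OF x] sub])
        then show "(F has_derivative (\<lambda>h. f x * h)) (at x within {?a..?b})"
          by (simp add: has_field_derivative_def)
      qed
      moreover have "?b - ?a = 1 / real n" using npos by (simp add: divide_simps)
      ultimately show ?thesis by (auto simp: mult.commute)
    qed
    then obtain \<xi> where xi: "\<And>k. k \<in> {1..n} \<Longrightarrow> \<xi> k \<in> {(real k - 1) / real n .. real k / real n} \<and>
        F (real k / real n) - F ((real k - 1) / real n) = f (\<xi> k) * (1 / real n)"
      by metis
    have I: "integral {0..1} f = (\<Sum>k=1..n. f (\<xi> k) * (1 / real n))"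
    proof -
      have "(\<Sum>k=1..n. f (\<xi> k) * (1 / real n)) =
            (\<Sum>k=1..n. F (real k / real n) - F (real (k - 1) / real n))"
        by (rule sum.cong) (use xi in \<open>auto simp: of_nat_diff\<close>)
      also have "\<dots> = F (real n / real n) - F (real 0 / real n)"
        by (rule telesc[where g = "\<lambda>k. F (real k / real n)"])
      also have "\<dots> = integral {0..1} f" using npos by (simp add: F_def)
      finally show ?thesis by simp
    qed
    have "\<bar>(\<Sum>k=1..n. f (real k / real n)) / real n - integral {0..1} f\<bar>
        = \<bar>(\<Sum>k=1..n. (f (real k / real n) - f (\<xi> k)) * (1 / real n))\<bar>"
      unfolding I by (simp add: sum_divide_distrib sum_subtractf diff_divide_distrib)
    also have "\<dots> \<le> (\<Sum>k=1..n. \<bar>(f (real k / real n) - f (\<xi> k)) * (1 / real n)\<bar>)"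
      by (rule sum_abs)
    also have "\<dots> \<le> (\<Sum>k=1..n. (e/2) * (1 / real n))"
    proof (rule sum_mono)
      fix k assume k: "k \<in> {1..n}"
      have xk: "\<xi> k \<in> {(real k - 1) / real n .. real k / real n}" using xi[OF k] by blast
      have kin: "real k / real n \<in> {0..1}" using k npos by (auto simp: divide_simps)
      have a0: "0 \<le> (real k - 1) / real n" using k npos by simp
      have b1: "real k / real n \<le> 1" using k npos by (simp add: divide_simps)
      have xin: "\<xi> k \<in> {0..1}" using xk a0 b1 by auto
      have "dist (\<xi> k) (real k / real n) < d"
      proof -
        have "real k / real n - \<xi> k \<le> 1 / real n"
          using xk by (auto simp: diff_divide_distrib)
        then show ?thesis using xk nd by (auto simp: dist_real_def)
      qed
      then have "\<bar>f (real k / real n) - f (\<xi> k)\<bar> < e/2"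
        using dd[OF kin xin] by (simp add: dist_real_def abs_minus_commute)
      then show "\<bar>(f (real k / real n) - f (\<xi> k)) * (1 / real n)\<bar> \<le> (e/2) * (1 / real n)"
      proof -
        have "\<bar>(f (real k / real n) - f (\<xi> k)) * (1 / real n)\<bar> = \<bar>f (real k / real n) - f (\<xi> k)\<bar> * (1 / real n)"
          using npos by (simp add: abs_mult)
        also have "\<dots> \<le> (e/2) * (1 / real n)"
          by (rule mult_right_mono) (use \<open>\<bar>f (real k / real n) - f (\<xi> k)\<bar> < e/2\<close> npos in auto)
        finally show ?thesis .
      qed
    qed
    also have "\<dots> = e/2" using npos by simp
    finally show "norm ((\<Sum>k=1..n. f (real k / real n)) / real n - integral {0..1} f) < e"
      using e by simp
  qed
qed


theorem proposition2:
  fixes f :: "real \<Rightarrow> real" and L :: real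
  assumes "continuous_on {0..1} f"
    and "(\<lambda>n. (\<Sum>k=1..<Suc n. f (real k / real (Suc n))) - (\<Sum>k=1..<n. f (real k / real n)))
           \<longlonglongrightarrow> L"
  shows "L = integral {0..1} f"
proof -
  define x where "x n = (\<Sum>k=1..<n. f (real k / real n))" for n
  have y: "(\<lambda>n. x (Suc n) - x n) \<longlonglongrightarrow> L" using assms(2) unfolding x_def .
  have tel: "(\<Sum>m<n. x (Suc m) - x m) = x n" for n
    using sum_lessThan_telescope[of x n] by (simp add: x_def)
  have A: "(\<lambda>n. x n / real n) \<longlonglongrightarrow> L"
    using cesaro[OF y] by (simp add: tel)
  have "(\<lambda>n. (\<Sum>k=1..n. f (real k / real n)) / real n - f 1 / real n) \<longlonglongrightarrow> integral {0..1} f - 0"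
    by (intro tendsto_diff riemann[OF assms(1)] tendsto_divide_0[OF tendsto_const] filterlim_at_top_imp_at_infinity[OF filterlim_real_sequentially])
  moreover have "\<forall>\<^sub>F n in sequentially. (\<Sum>k=1..n. f (real k / real n)) / real n - f 1 / real n = x n / real n"
    using eventually_gt_at_top[of 0]
  proof eventually_elim
    case (elim n)
    then have "(\<Sum>k=1..n. f (real k / real n)) = x n + f (real n / real n)"
    proof -
      have "{1..n} = {1..<Suc n}" by (simp add: atLeastLessThanSuc_atLeastAtMost)
      moreover have "1 \<le> n" using elim by simp
      ultimately show ?thesis unfolding x_def by (simp add: sum.atLeastLessThan_Suc)
    qed
    then show ?case using elim by (simp add: add_divide_distrib)
  qed
  ultimately have B: "(\<lambda>n. x n / real n) \<longlonglongrightarrow> integral {0..1} f"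
    by (simp add: tendsto_cong)
  show ?thesis using LIMSEQ_unique[OF A B] .
qed

end
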